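(* Let $n\ge1$, $d\ge1$, and let $CC(n,d)=\mathrm{conv}\{\overline{\alpha}_L: L\text{ a corner cut staircase in }d\text{ dimensions of size }n\}$ be the corner cut polytope, where $\overline{\alpha}_L=\sum_{\alpha\in L}\alpha$. Then: (i) for each $i$, the intersection of $CC(n,d)$ with the $i$-th coordinate axis is the point $\binom{n}{2}e_i$ (where $e_i$ is the $i$-th standard basis vector); (ii) if $n=\binom{k+d-1}{d}$ for some integer $k\ge1$, then the corner cut polytope is pointed, in the sense that the staircase of all exponents of total degree at most $k-1$ is a corner cut of size $n$ whose point $\overline{\alpha}_L$ is a vertex of $CC(n,d)$.
   Context: A staircase is a finite set $L\subset\mathbb{Z}^d_{\ge0}$ such that $\alpha\in L$ and $\beta\le\alpha$ componentwise imply $\beta\in L$. A staircase $L$ is a corner cut if there is a $(d-1)$-dimensional affine hyperplane separating $L$ from its complement $\mathbb{Z}^d_{\ge0}\setminus L$. *)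

theory Defs
  imports "HOL-Analysis.Analysis"
begin

text \<open>Exponent vectors in Z^d_{>=0} are functions 'd => nat for a finite index type 'd
  (so d = CARD('d) >= 1).\<close>

definition staircase :: "('d::finite \<Rightarrow> nat) set \<Rightarrow> bool" where
  "staircase L \<longleftrightarrow> finite L \<and> (\<forall>\<alpha>\<in>L. \<forall>\<beta>. (\<forall>i. \<beta> i \<le> \<alpha> i) \<longrightarrow> \<beta> \<in> L)"

definition corner_cut :: "('d::finite \<Rightarrow> nat) set \<Rightarrow> bool" where
  "corner_cut L \<longleftrightarrow> staircase L \<and>
     (\<exists>(w::'d \<Rightarrow> real) c. (\<exists>i. w i \<noteq> 0) \<and>
        (\<forall>\<alpha>\<in>L. (\<Sum>i\<in>UNIV. w i * real (\<alpha> i)) < c) \<and>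
        (\<forall>\<alpha>. \<alpha> \<notin> L \<longrightarrow> (\<Sum>i\<in>UNIV. w i * real (\<alpha> i)) > c))"

definition alpha_bar :: "('d::finite \<Rightarrow> nat) set \<Rightarrow> real ^ 'd" where
  "alpha_bar L = (\<chi> i. real (\<Sum>\<alpha>\<in>L. \<alpha> i))"

definition corner_cut_polytope :: "nat \<Rightarrow> (real ^ 'd::finite) set" where
  "corner_cut_polytope n =
     convex hull {alpha_bar L | L :: ('d \<Rightarrow> nat) set. corner_cut L \<and> card L = n}"

end

theory Submission
  imports Defs
begin


lemma hull_min:
  fixes G :: "(real^'d::finite) set" and J :: "'d set"
  defines "f \<equiv> \<lambda>x::real^'d. \<Sum>j\<in>J. x $ j"
  assumes z: "z \<in> G" and gt: "\<forall>g\<in>G. g \<noteq> z \<longrightarrow> f g > m" and fz: "f z = m"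
  shows "\<forall>y\<in>convex hull G. f y \<ge> m"
    and "y \<in> convex hull G \<Longrightarrow> f y \<le> m \<Longrightarrow> y = z"
proof -
  have lin: "f (u *\<^sub>R a + v *\<^sub>R b) = u * f a + v * f b" for u v a b
    unfolding f_def by (simp add: sum.distrib sum_distrib_left)
  have cge: "convex {x. f x \<ge> m}"
    unfolding convex_def
  proof (clarsimp simp: lin)
    fix x y :: "real^'d" and u v :: real assume h: "m \<le> f x" "m \<le> f y" "0 \<le> u" "0 \<le> v" "u + v = 1"
    have "u * m \<le> u * f x" "v * m \<le> v * f y" using h by (auto intro: mult_left_mono)
    moreover have e: "u * m + v * m = m" using h(5) by (metis distrib_right mult_1)
    ultimately show "m \<le> u * f x + v * f y" by linarith
  qed
  have cgt: "convex {x. f x > m}"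
    unfolding convex_def
  proof (clarsimp simp: lin)
    fix x y :: "real^'d" and u v :: real assume h: "m < f x" "m < f y" "0 \<le> u" "0 \<le> v" "u + v = 1"
    have "u * m \<le> u * f x" "v * m \<le> v * f y" using h by (auto intro: mult_left_mono)
    moreover have "u * m < u * f x \<or> v * m < v * f y" using h by (cases "u = 0") auto
    moreover have e: "u * m + v * m = m" using h(5) by (metis distrib_right mult_1)
    ultimately show "m < u * f x + v * f y" by linarith
  qed
  have "G \<subseteq> {x. f x \<ge> m}" using gt fz by force
  then have "convex hull G \<subseteq> {x. f x \<ge> m}" using cge by (rule hull_minimal)
  then show "\<forall>y\<in>convex hull G. f y \<ge> m" by blast
  assume y: "y \<in> convex hull G" "f y \<le> m"
  show "y = z"
  proof (cases "G - {z} = {}")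
    case True
    then have "G = {z}" using z by blast
    then show ?thesis using y by simp
  next
    case False
    have "G = insert z (G - {z})" using z by blast
    with y(1) convex_hull_insert[OF False, of z] obtain u v b where
      uv: "u \<ge> 0" "v \<ge> 0" "u + v = 1" "b \<in> convex hull (G - {z})" "y = u *\<^sub>R z + v *\<^sub>R b"
      by auto
    have "G - {z} \<subseteq> {x. f x > m}" using gt by auto
    then have "convex hull (G - {z}) \<subseteq> {x. f x > m}" using cgt by (rule hull_minimal)
    then have fb: "f b > m" using uv by auto
    have "f y = u * m + v * f b" using uv fz lin by simp
    moreover have "u * m = m - v * m" using uv(3) by (metis add_diff_cancel_right' distrib_right mult_1)
    ultimately have "v * (f b - m) \<le> 0" using y(2) by (simp add: algebra_simps)
    then have "v \<le> 0" using fb by (simp add: mult_le_0_iff)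
    then have "v = 0" using uv by simp
    then show ?thesis using uv by simp
  qed
qed

lemma upd_sum: "a \<notin> A \<Longrightarrow> (\<Sum>x\<in>A. if x = a then t else \<alpha> x) = (sum \<alpha> A :: nat)"
  by (intro sum.cong) auto

lemma count_simplex:
  assumes "finite A"
  shows "card {\<alpha>::'a\<Rightarrow>nat. (\<forall>x. x\<notin>A \<longrightarrow> \<alpha> x = 0) \<and> (\<Sum>x\<in>A. \<alpha> x) \<le> m}
         = (m + card A) choose card A"
  using assms
proof (induction A arbitrary: m rule: finite_induct)
  case empty
  have "{\<alpha>::'a\<Rightarrow>nat. (\<forall>x. x\<notin>{} \<longrightarrow> \<alpha> x = 0) \<and> (\<Sum>x\<in>{}. \<alpha> x) \<le> m} = {\<lambda>_. 0}"
    by auto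
  then show ?case by simp
next
  case (insert a A)
  define S where "S = (\<lambda>m. {\<alpha>::'a\<Rightarrow>nat. (\<forall>x. x\<notin>A \<longrightarrow> \<alpha> x = 0) \<and> (\<Sum>x\<in>A. \<alpha> x) \<le> m})"
  have finS: "finite (S t)" for t
  proof -
    have "card (S t) > 0" using insert.IH[of t] unfolding S_def by simp
    then show ?thesis using card_gt_0_iff by blast
  qed
  have bij: "bij_betw (\<lambda>\<alpha>. (\<alpha> a, \<alpha>(a:=0)))
     {\<alpha>::'a\<Rightarrow>nat. (\<forall>x. x\<notin>insert a A \<longrightarrow> \<alpha> x = 0) \<and> (\<Sum>x\<in>insert a A. \<alpha> x) \<le> m}
     (Sigma {..m} (\<lambda>t. S (m - t)))"
  proof (rule bij_betwI[where g = "\<lambda>(t,\<beta>). \<beta>(a:=t)"])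
    show "(\<lambda>\<alpha>. (\<alpha> a, \<alpha>(a := 0))) \<in> {\<alpha>. (\<forall>x. x \<notin> insert a A \<longrightarrow> \<alpha> x = 0) \<and> sum \<alpha> (insert a A) \<le> m} \<rightarrow> Sigma {..m} (\<lambda>t. S (m - t))"
      using insert.hyps by (auto simp: S_def upd_sum)
    show "(\<lambda>(t, \<beta>). \<beta>(a := t)) \<in> Sigma {..m} (\<lambda>t. S (m - t)) \<rightarrow> {\<alpha>. (\<forall>x. x \<notin> insert a A \<longrightarrow> \<alpha> x = 0) \<and> sum \<alpha> (insert a A) \<le> m}"
      using insert.hyps by (auto simp: S_def upd_sum)
  qed (use insert.hyps in \<open>auto simp: S_def\<close>)
  have "card {\<alpha>::'a\<Rightarrow>nat. (\<forall>x. x\<notin>insert a A \<longrightarrow> \<alpha> x = 0) \<and> (\<Sum>x\<in>insert a A. \<alpha> x) \<le> m}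
     = card (Sigma {..m} (\<lambda>t. S (m - t)))" using bij_betw_same_card[OF bij] .
  also have "\<dots> = (\<Sum>t\<le>m. card (S (m - t)))" using finS by (simp add: card_SigmaI)
  also have "\<dots> = (\<Sum>t\<le>m. (m - t + card A) choose card A)" unfolding S_def using insert.IH by simp
  also have "\<dots> = (\<Sum>s\<le>m. (s + card A) choose card A)"
    by (rule sum.reindex_bij_witness[where i="\<lambda>s. m - s" and j="\<lambda>t. m - t"]) auto
  also have "\<dots> = (\<Sum>s\<le>m. (card A + s) choose s)"
    by (intro sum.cong refl) (metis add.commute binomial_symmetric le_add2 add_diff_cancel_right')
  also have "\<dots> = Suc (card A + m) choose m" by (rule sum_choose_lower)
  also have "\<dots> = Suc (card A + m) choose Suc (card A)"
  proof -
    have le: "m \<le> Suc (card A + m)" by simp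
    have eq: "Suc (card A + m) - m = Suc (card A)" by simp
    from binomial_symmetric[OF le] eq show ?thesis by (simp only:)
  qed
  also have "\<dots> = (m + card (insert a A)) choose card (insert a A)"
  proof -
    have "m + card (insert a A) = Suc (card A + m)" using insert.hyps by simp
    moreover have "card (insert a A) = Suc (card A)" using insert.hyps by simp
    ultimately show ?thesis by (simp only:)
  qed
  finally show ?case .
qed


lemma ab_sum: "finite L \<Longrightarrow> (\<Sum>j\<in>J. alpha_bar L $ j) = real (\<Sum>\<alpha>\<in>L. \<Sum>j\<in>J. \<alpha> j)"
  unfolding alpha_bar_def by (simp add: of_nat_sum sum.swap[of _ J])

lemma axis_bound:
  fixes L :: "('d::finite \<Rightarrow> nat) set"
  assumes st: "staircase L" and a: "\<alpha> \<in> L"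
  shows "\<alpha> i < card L"
proof -
  define e where "e = (\<lambda>t::nat. (\<lambda>j::'d. if j = i then t else 0))"
  have inj: "inj_on e {..\<alpha> i}" unfolding e_def inj_on_def by (metis)
  have sub: "e ` {..\<alpha> i} \<subseteq> L"
  proof
    fix x assume "x \<in> e ` {..\<alpha> i}"
    then obtain t where t: "t \<le> \<alpha> i" "x = e t" by auto
    have "\<forall>j. x j \<le> \<alpha> j" using t unfolding e_def by auto
    then show "x \<in> L" using st a unfolding staircase_def by blast
  qed
  have fin: "finite L" using st unfolding staircase_def by blast
  have "card (e ` {..\<alpha> i}) \<le> card L" using card_mono[OF fin sub] .
  then show ?thesis using card_image[OF inj] by simp
qed

lemma part1:
  fixes n :: nat and i :: "'d::finite"
  assumes "n \<ge> 1"
  shows "corner_cut_polytope n \<inter> {x :: real ^ 'd. \<forall>j. j \<noteq> i \<longrightarrow> x $ j = 0}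
              = {real (n choose 2) *\<^sub>R axis i 1}"
proof -
  define e where "e = (\<lambda>t::nat. (\<lambda>j::'d. if j = i then t else 0))"
  define Li where "Li = e ` {..<n}"
  have inj: "inj_on e X" for X unfolding e_def inj_on_def by (metis)
  have cardLi: "card Li = n" unfolding Li_def using card_image[OF inj] by simp
  have finLi: "finite Li" unfolding Li_def by simp
  have memLi: "\<alpha> \<in> Li \<longleftrightarrow> (\<forall>j. j \<noteq> i \<longrightarrow> \<alpha> j = 0) \<and> \<alpha> i < n" for \<alpha>
  proof
    assume "\<alpha> \<in> Li" then show "(\<forall>j. j \<noteq> i \<longrightarrow> \<alpha> j = 0) \<and> \<alpha> i < n"
      unfolding Li_def e_def by auto
  next
    assume h: "(\<forall>j. j \<noteq> i \<longrightarrow> \<alpha> j = 0) \<and> \<alpha> i < n"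
    then have "\<alpha> = e (\<alpha> i)" unfolding e_def by auto
    then show "\<alpha> \<in> Li" unfolding Li_def using h by auto
  qed
  have stLi: "staircase Li"
    unfolding staircase_def
  proof (intro conjI finLi ballI allI impI)
    fix \<alpha> \<beta> assume a: "\<alpha> \<in> Li" and b: "\<forall>j. \<beta> j \<le> \<alpha> j"
    then show "\<beta> \<in> Li" unfolding memLi by (metis le_zero_eq order.strict_trans1)
  qed
  define w where "w = (\<lambda>j::'d. if j = i then (1::real) else real n)"
  have wsum: "(\<Sum>j\<in>UNIV. w j * real (\<alpha> j)) \<ge> w j * real (\<alpha> j)" for \<alpha> j
    by (rule member_le_sum) (auto simp: w_def)
  have ccLi: "corner_cut Li"
    unfolding corner_cut_def
  proof (intro conjI stLi exI[of _ w] exI[of _ "real n - 1/2"] allI ballI impI)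
    show "\<exists>i. w i \<noteq> 0" by (rule exI[of _ i]) (simp add: w_def)
  next
    fix \<alpha> assume a: "\<alpha> \<in> Li"
    have "(\<Sum>j\<in>UNIV. w j * real (\<alpha> j)) = (\<Sum>j\<in>UNIV. if j = i then real (\<alpha> i) else 0)"
      using a unfolding memLi by (intro sum.cong) (auto simp: w_def)
    also have "\<dots> = real (\<alpha> i)" by simp
    finally show "(\<Sum>j\<in>UNIV. w j * real (\<alpha> j)) < real n - 1/2" using a memLi by auto
  next
    fix \<alpha> assume a: "\<alpha> \<notin> Li"
    then obtain j where "w j * real (\<alpha> j) \<ge> real n"
    proof (cases "\<exists>j. j \<noteq> i \<and> \<alpha> j \<noteq> 0")
      case True
      then obtain j where "j \<noteq> i" "\<alpha> j \<ge> 1" by auto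
      then have "w j * real (\<alpha> j) \<ge> real n" unfolding w_def
        by (simp add: mult_le_cancel_left1)
      then show ?thesis using that by blast
    next
      case False
      then have "\<alpha> i \<ge> n" using a memLi by auto
      then show ?thesis using that[of i] by (simp add: w_def)
    qed
    then show "(\<Sum>j\<in>UNIV. w j * real (\<alpha> j)) > real n - 1/2" using wsum[of j \<alpha>] by linarith
  qed
  define x0 where "x0 = alpha_bar Li"
  have x0v: "x0 = real (n choose 2) *\<^sub>R axis i 1"
  proof (subst vec_eq_iff, intro allI)
    fix j
    have "x0 $ j = real (\<Sum>t<n. e t j)"
      unfolding x0_def alpha_bar_def Li_def by (simp add: sum.reindex[OF inj])
    also have "\<dots> = (if j = i then real (n choose 2) else 0)"
    proof (cases "j = i")
      case True
      have "(\<Sum>t<n. t) = n choose 2"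
        using Sum_Ico_nat[of 0 n] by (simp add: choose_two atLeast0LessThan)
      then show ?thesis using True by (simp add: e_def)
    next
      case False then show ?thesis by (simp add: e_def)
    qed
    finally show "x0 $ j = (real (n choose 2) *\<^sub>R axis i 1) $ j" by (simp add: axis_def)
  qed
  define G where "G = {alpha_bar L | L :: ('d \<Rightarrow> nat) set. corner_cut L \<and> card L = n}"
  have x0G: "x0 \<in> G" unfolding G_def x0_def using ccLi cardLi by blast
  have gt: "\<forall>g\<in>G. g \<noteq> x0 \<longrightarrow> (\<Sum>j\<in>UNIV - {i}. g $ j) > 0"
  proof (intro ballI impI)
    fix g assume "g \<in> G" "g \<noteq> x0"
    then obtain L where L: "g = alpha_bar L" "corner_cut L" "card L = n" "L \<noteq> Li"
      unfolding G_def x0_def by auto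
    have st: "staircase L" using L unfolding corner_cut_def by auto
    have fin: "finite L" using st unfolding staircase_def by auto
    have "\<exists>\<alpha>\<in>L. \<exists>j. j \<noteq> i \<and> \<alpha> j > 0"
    proof (rule ccontr)
      assume "\<not> ?thesis"
      then have h: "\<forall>\<alpha>\<in>L. \<forall>j. j \<noteq> i \<longrightarrow> \<alpha> j = 0" by auto
      have "L \<subseteq> Li"
      proof
        fix \<alpha> assume "\<alpha> \<in> L"
        then show "\<alpha> \<in> Li" unfolding memLi using h axis_bound[OF st, of \<alpha> i] L(3) by auto
      qed
      then have "L = Li" using card_subset_eq[OF finLi] L(3) cardLi by auto
      then show False using L by auto
    qed
    then obtain \<alpha> j where aj: "\<alpha> \<in> L" "j \<noteq> i" "\<alpha> j > 0" by auto
    have "\<alpha> j \<le> (\<Sum>j\<in>UNIV - {i}. \<alpha> j)" by (rule member_le_sum) (use aj in auto)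
    also have "\<dots> \<le> (\<Sum>\<alpha>\<in>L. \<Sum>j\<in>UNIV - {i}. \<alpha> j)" by (rule member_le_sum) (use aj fin in auto)
    finally have pos: "0 < (\<Sum>\<alpha>\<in>L. \<Sum>j\<in>UNIV - {i}. \<alpha> j)" using aj(3) by linarith
    have "(\<Sum>j\<in>UNIV - {i}. g $ j) = real (\<Sum>\<alpha>\<in>L. \<Sum>j\<in>UNIV - {i}. \<alpha> j)"
      unfolding L(1) by (rule ab_sum[OF fin])
    then show "(\<Sum>j\<in>UNIV - {i}. g $ j) > 0" using pos by (simp only: of_nat_0_less_iff)
  qed
  have fx0: "(\<Sum>j\<in>UNIV - {i}. x0 $ j) = 0" unfolding x0v by (simp add: axis_def)
  note hm = hull_min[where J="UNIV - {i}" and m=0 and G=G and z=x0, OF x0G gt fx0]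
  have cc: "corner_cut_polytope n = convex hull G" unfolding corner_cut_polytope_def G_def by simp
  show ?thesis
  proof
    show "corner_cut_polytope n \<inter> {x. \<forall>j. j \<noteq> i \<longrightarrow> x $ j = 0} \<subseteq> {real (n choose 2) *\<^sub>R axis i 1}"
    proof
      fix y assume y: "y \<in> corner_cut_polytope n \<inter> {x. \<forall>j. j \<noteq> i \<longrightarrow> x $ j = 0}"
      have "(\<Sum>j\<in>UNIV - {i}. y $ j) = 0" using y by simp
      then have "y = x0" using hm(2)[of y] y cc by auto
      then show "y \<in> {real (n choose 2) *\<^sub>R axis i 1}" using x0v by simp
    qed
    show "{real (n choose 2) *\<^sub>R axis i 1} \<subseteq> corner_cut_polytope n \<inter> {x. \<forall>j. j \<noteq> i \<longrightarrow> x $ j = 0}"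
      using x0G hull_inc[of x0 G] cc x0v by (auto simp: axis_def)
  qed
qed


lemma part2:
  fixes n k :: nat
  assumes n1: "n \<ge> 1" and k1: "k \<ge> 1" and nk: "n = (k + CARD('d::finite) - 1) choose CARD('d)"
  defines "L0 \<equiv> {\<alpha> :: 'd \<Rightarrow> nat. (\<Sum>i\<in>UNIV. \<alpha> i) \<le> k - 1}"
  shows "corner_cut L0 \<and> card L0 = n \<and>
         alpha_bar L0 extreme_point_of (corner_cut_polytope n :: (real ^ 'd) set)"
proof -
  have "card L0 = (k - 1 + CARD('d)) choose CARD('d)"
    using count_simplex[of "UNIV :: 'd set" "k - 1"] unfolding L0_def by simp
  then have cardL0: "card L0 = n" using nk k1 by simp
  have finL0: "finite L0" using cardL0 n1 card.infinite by fastforce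
  have st: "staircase L0" unfolding staircase_def
  proof (intro conjI finL0 ballI allI impI)
    fix \<alpha> \<beta> assume a: "\<alpha> \<in> L0" and b: "\<forall>i. \<beta> (i::'d) \<le> \<alpha> i"
    have "(\<Sum>i\<in>UNIV. \<beta> i) \<le> (\<Sum>i\<in>UNIV. \<alpha> i)" using b by (intro sum_mono) auto
    then show "\<beta> \<in> L0" using a unfolding L0_def by auto
  qed
  have cc: "corner_cut L0" unfolding corner_cut_def
  proof (intro conjI st exI[of _ "\<lambda>_. 1"] exI[of _ "real k - 1/2"] allI ballI impI)
    show "\<exists>i::'d. (1::real) \<noteq> 0" by simp
  next
    fix \<alpha> assume "\<alpha> \<in> L0"
    then have "(\<Sum>i\<in>UNIV. \<alpha> i) \<le> k - 1" unfolding L0_def by simp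
    then have "real (\<Sum>i\<in>UNIV. \<alpha> i) \<le> real k - 1" using k1 by linarith
    moreover have "(\<Sum>i\<in>UNIV. 1 * real (\<alpha> i)) = real (\<Sum>i\<in>UNIV. \<alpha> i)" by (simp add: of_nat_sum)
    ultimately show "(\<Sum>i\<in>UNIV. 1 * real (\<alpha> i)) < real k - 1/2" by linarith
  next
    fix \<alpha> assume "\<alpha> \<notin> L0"
    then have "(\<Sum>i\<in>UNIV. \<alpha> i) \<ge> k" unfolding L0_def by simp
    then have "real (\<Sum>i\<in>UNIV. \<alpha> i) \<ge> real k" by linarith
    moreover have "(\<Sum>i\<in>UNIV. 1 * real (\<alpha> i)) = real (\<Sum>i\<in>UNIV. \<alpha> i)" by (simp add: of_nat_sum)
    ultimately show "(\<Sum>i\<in>UNIV. 1 * real (\<alpha> i)) > real k - 1/2" by linarith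
  qed
  define s where "s = (\<lambda>\<alpha>::'d\<Rightarrow>nat. \<Sum>i\<in>UNIV. \<alpha> i)"
  define x0 where "x0 = alpha_bar L0"
  define m where "m = real (sum s L0)"
  define G where "G = {alpha_bar L | L :: ('d \<Rightarrow> nat) set. corner_cut L \<and> card L = n}"
  have x0G: "x0 \<in> G" unfolding G_def x0_def using cc cardL0 by blast
  have fx0: "(\<Sum>j\<in>UNIV. x0 $ j) = m" unfolding x0_def m_def s_def by (rule ab_sum[OF finL0])
  have gt: "\<forall>g\<in>G. g \<noteq> x0 \<longrightarrow> (\<Sum>j\<in>UNIV. g $ j) > m"
  proof (intro ballI impI)
    fix g assume "g \<in> G" "g \<noteq> x0"
    then obtain L where L: "g = alpha_bar L" "corner_cut L" "card L = n" "L \<noteq> L0"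
      unfolding G_def x0_def by auto
    have fin: "finite L" using L unfolding corner_cut_def staircase_def by auto
    have ne: "L - L0 \<noteq> {}"
    proof
      assume "L - L0 = {}"
      then have "L \<subseteq> L0" by auto
      then have "L = L0" using card_subset_eq[OF finL0] L(3) cardL0 by auto
      then show False using L by auto
    qed
    have cD: "card (L - L0) = card (L0 - L)"
    proof -
      have "card (L - L0) = card L - card (L \<inter> L0)" using fin by (simp add: card_Diff_subset_Int)
      moreover have "card (L0 - L) = card L0 - card (L0 \<inter> L)" using finL0 by (simp add: card_Diff_subset_Int)
      ultimately show ?thesis using L(3) cardL0 by (simp add: Int_commute)
    qed
    have c0: "card (L - L0) > 0" using ne fin by auto
    have s1: "k * card (L - L0) \<le> sum s (L - L0)"
    proof -
      have "\<And>\<alpha>. \<alpha> \<in> L - L0 \<Longrightarrow> k \<le> s \<alpha>" using k1 unfolding L0_def s_def by auto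
      from sum_bounded_below[of "L - L0" k s, OF this] show ?thesis by (simp add: mult.commute)
    qed
    have s2: "sum s (L0 - L) \<le> (k - 1) * card (L0 - L)"
    proof -
      have "\<And>\<alpha>. \<alpha> \<in> L0 - L \<Longrightarrow> s \<alpha> \<le> k - 1" unfolding L0_def s_def by auto
      from sum_bounded_above[of "L0 - L" s "k - 1", OF this] show ?thesis by (simp add: mult.commute)
    qed
    have "(k - 1) * card (L0 - L) < k * card (L - L0)" using cD c0 k1 by simp
    then have lt: "sum s (L0 - L) < sum s (L - L0)" using s1 s2 by linarith
    have e1: "sum s L = sum s (L \<inter> L0) + sum s (L - L0)"
      by (rule sum.Int_Diff[OF fin])
    have e2: "sum s L0 = sum s (L0 \<inter> L) + sum s (L0 - L)"
      by (rule sum.Int_Diff[OF finL0])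
    have e3: "L0 \<inter> L = L \<inter> L0" by blast
    have "sum s L0 < sum s L" using e1 e2 e3 lt by simp
    moreover have "(\<Sum>j\<in>UNIV. g $ j) = real (sum s L)"
      unfolding L(1) s_def by (rule ab_sum[OF fin])
    ultimately show "(\<Sum>j\<in>UNIV. g $ j) > m" unfolding m_def by (simp only: of_nat_less_iff)
  qed
  note hm = hull_min[where J="UNIV" and m=m and G=G and z=x0, OF x0G gt fx0]
  have ccp: "corner_cut_polytope n = convex hull G" unfolding corner_cut_polytope_def G_def by simp
  have lin: "(\<Sum>j\<in>UNIV. (v *\<^sub>R a + u *\<^sub>R b) $ j) = v * (\<Sum>j\<in>UNIV. a $ j) + u * (\<Sum>j\<in>UNIV. b $ j)"
    for u v and a b :: "real^'d"
    by (simp add: sum.distrib sum_distrib_left)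
  have ext: "x0 extreme_point_of convex hull G"
    unfolding extreme_point_of_def
  proof (intro conjI ballI)
    show "x0 \<in> convex hull G" by (rule hull_inc[OF x0G])
  next
    fix a b assume a: "a \<in> convex hull G" and b: "b \<in> convex hull G"
    show "x0 \<notin> open_segment a b"
    proof
      assume "x0 \<in> open_segment a b"
      then obtain u where u: "a \<noteq> b" "0 < u" "u < 1" "x0 = (1 - u) *\<^sub>R a + u *\<^sub>R b"
        unfolding in_segment(2) by blast
      define fa where "fa = (\<Sum>j\<in>UNIV. a $ j)"
      define fb where "fb = (\<Sum>j\<in>UNIV. b $ j)"
      have ga: "fa \<ge> m" "fb \<ge> m" using hm(1) a b unfolding fa_def fb_def by auto
      have eq: "(1 - u) * fa + u * fb = m" using fx0 lin[of "1 - u" a u b] u(4) unfolding fa_def fb_def by simp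
      have t1: "(1 - u) * (fa - m) \<ge> 0" using ga u by simp
      have t2: "u * (fb - m) \<ge> 0" using ga u by simp
      have "(1 - u) * (fa - m) + u * (fb - m) = (1 - u) * fa + u * fb - m"
        by (simp add: algebra_simps)
      then have t3: "(1 - u) * (fa - m) + u * (fb - m) = 0" using eq by simp
      have "(1 - u) * (fa - m) = 0" using t1 t2 t3 by linarith
      then have "fa \<le> m" using u by simp
      have "u * (fb - m) = 0" using t1 t2 t3 by linarith
      then have "fb \<le> m" using u by simp
      have "a = x0" using hm(2)[OF a] \<open>fa \<le> m\<close> unfolding fa_def by blast
      moreover have "b = x0" using hm(2)[OF b] \<open>fb \<le> m\<close> unfolding fb_def by blast
      ultimately show False using u(1) by simp
    qed
  qed
  show ?thesis using cc cardL0 ext ccp unfolding x0_def by simp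
qed

theorem lemma2:
  fixes n :: nat
  assumes "n \<ge> 1"
  shows "(\<forall>i::'d::finite.
            corner_cut_polytope n \<inter> {x :: real ^ 'd. \<forall>j. j \<noteq> i \<longrightarrow> x $ j = 0}
              = {real (n choose 2) *\<^sub>R axis i 1})
       \<and> (\<forall>k::nat. k \<ge> 1 \<and> n = (k + CARD('d) - 1) choose CARD('d) \<longrightarrow>
            (let L0 = {\<alpha> :: 'd \<Rightarrow> nat. (\<Sum>i\<in>UNIV. \<alpha> i) \<le> k - 1}
             in corner_cut L0 \<and> card L0 = n \<and>
                alpha_bar L0 extreme_point_of (corner_cut_polytope n :: (real ^ 'd) set)))"
proof (intro conjI allI impI)
  fix i :: 'd
  show "corner_cut_polytope n \<inter> {x :: real ^ 'd. \<forall>j. j \<noteq> i \<longrightarrow> x $ j = 0}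
              = {real (n choose 2) *\<^sub>R axis i 1}" by (rule part1[OF assms])
next
  fix k :: nat
  assume h: "k \<ge> 1 \<and> n = (k + CARD('d) - 1) choose CARD('d)"
  show "let L0 = {\<alpha> :: 'd \<Rightarrow> nat. (\<Sum>i\<in>UNIV. \<alpha> i) \<le> k - 1}
             in corner_cut L0 \<and> card L0 = n \<and>
                alpha_bar L0 extreme_point_of (corner_cut_polytope n :: (real ^ 'd) set)"
    unfolding Let_def using part2[OF assms, of k] h by blast
qed

end
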